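(* Let $x\in\mathbf{S}$, let $v\in V$ with $\mathsf{supp}(v)\ne\emptyset$, and let $e=\{v,w\}\in\mathsf{T}(v)$. (E1) If $e\in E_1$, then $x(E(w))=1$ and $\mathsf{B}(w)=\{e\}$. (E2) If $e\in E_2$, then $x(E(w))=1$, $e\in\mathsf{B}(w)$, and $x(E[\sim_v e])\ge x(E[\sim_w e])$.
   Context: Setting: $G=(V,E)$ is a finite simple bipartite graph with $V=V_1\sqcup V_2$, every edge joining a vertex of $V_1$ to a vertex of $V_2$; an edge is identified with the set of its two endpoints. $E$ is partitioned into $E_1,E_2$. For $F\subseteq E$ and $v\in V$, $F(v)$ is the set of edges of $F$ incident to $v$. For every $v\in V$ there is a transitive and complete binary relation $\succsim_v$ on $E(v)\cup\{\emptyset\}$ with $e\succsim_v\emptyset$ and $\emptyset\not\succsim_v e$ for all $e\in E(v)$; $\succ_v$ and $\sim_v$ are its strict and indifference parts. For $x\in\mathbb{R}^E$, $x(F)=\sum_{e\in F}x(e)$. $E[\succ_v e]=\{f\in E(v): f\succ_v e\}$, $E[\sim_v e]=\{f\in E(v): f\sim_v e\}$. $\mathbf{S}$ is the set of $x\in\mathbb{R}_+^E$ with (1) $x(E(v))\le1$ for all $v\in V$; (2) $x(e)+\sum_{v\in e}x(E[\succ_v e])\ge1$ for all $e\in E_1$; (3) $x(E[\sim_v e])+\sum_{w\in e}x(E[\succ_w e])\ge1$ for all $e\in E_2$, $v\in e$. For $x\in\mathbf{S}$: $\mathsf{supp}=\{e\in E: x(e)>0\}$; for $v$ with $\mathsf{supp}(v)\neq\emptyset$,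 $\mathsf{T}(v)$ (resp. $\mathsf{B}(v)$) is the set of $e\in\mathsf{supp}(v)$ with $e\succsim_v f$ (resp. $f\succsim_v e$) for all $f\in\mathsf{supp}(v)$. *)

theory Defs
  imports Complex_Main
begin

(* The weak preference of vertex v
   is a relation  pref v  on  (E(v) \<union> {\<emptyset>}), where the empty set \<emptyset> (no edge) is modelled
   by  None  and an edge e by  Some e. *)

type_synonym 'v edge = "'v set"
type_synonym 'v prefs = "'v \<Rightarrow> 'v edge option \<Rightarrow> 'v edge option \<Rightarrow> bool"

definition bipartite_graph :: "'v set \<Rightarrow> 'v set \<Rightarrow> 'v edge set \<Rightarrow> bool" where
  "bipartite_graph V1 V2 E \<longleftrightarrow> finite V1 \<and> finite V2 \<and> V1 \<inter> V2 = {} \<and>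
     (\<forall>e\<in>E. \<exists>a\<in>V1. \<exists>b\<in>V2. e = {a, b})"

definition inc :: "'v edge set \<Rightarrow> 'v \<Rightarrow> 'v edge set" where
  "inc F v = {e \<in> F. v \<in> e}"

definition valid_prefs :: "'v set \<Rightarrow> 'v edge set \<Rightarrow> 'v prefs \<Rightarrow> bool" where
  "valid_prefs V E R \<longleftrightarrow> (\<forall>v\<in>V.
     let D = Some ` inc E v \<union> {None} in
       (\<forall>a\<in>D. \<forall>b\<in>D. \<forall>c\<in>D. R v a b \<longrightarrow> R v b c \<longrightarrow> R v a c) \<and>
       (\<forall>a\<in>D. \<forall>b\<in>D. R v a b \<or> R v b a) \<and>
       (\<forall>e\<in>inc E v. R v (Some e) None \<and> \<not> R v None (Some e)))"

definition spref :: "'v prefs \<Rightarrow> 'v \<Rightarrow> 'v edge \<Rightarrow> 'v edge \<Rightarrow> bool" where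
  "spref R v e f \<longleftrightarrow> R v (Some e) (Some f) \<and> \<not> R v (Some f) (Some e)"

definition ipref :: "'v prefs \<Rightarrow> 'v \<Rightarrow> 'v edge \<Rightarrow> 'v edge \<Rightarrow> bool" where
  "ipref R v e f \<longleftrightarrow> R v (Some e) (Some f) \<and> R v (Some f) (Some e)"

definition better :: "'v edge set \<Rightarrow> 'v prefs \<Rightarrow> 'v \<Rightarrow> 'v edge \<Rightarrow> 'v edge set" where
  "better E R v e = {f \<in> inc E v. spref R v f e}"

definition indiff :: "'v edge set \<Rightarrow> 'v prefs \<Rightarrow> 'v \<Rightarrow> 'v edge \<Rightarrow> 'v edge set" where
  "indiff E R v e = {f \<in> inc E v. ipref R v f e}"

definition xsum :: "('v edge \<Rightarrow> real) \<Rightarrow> 'v edge set \<Rightarrow> real" where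
  "xsum x F = (\<Sum>e\<in>F. x e)"

definition in_S ::
  "'v set \<Rightarrow> 'v edge set \<Rightarrow> 'v edge set \<Rightarrow> 'v edge set \<Rightarrow> 'v prefs \<Rightarrow> ('v edge \<Rightarrow> real) \<Rightarrow> bool" where
  "in_S V E E1 E2 R x \<longleftrightarrow>
     (\<forall>e\<in>E. 0 \<le> x e) \<and>
     (\<forall>v\<in>V. xsum x (inc E v) \<le> 1) \<and>
     (\<forall>e\<in>E1. x e + (\<Sum>v\<in>e. xsum x (better E R v e)) \<ge> 1) \<and>
     (\<forall>e\<in>E2. \<forall>v\<in>e. xsum x (indiff E R v e) + (\<Sum>w\<in>e. xsum x (better E R w e)) \<ge> 1)"

definition supp :: "'v edge set \<Rightarrow> ('v edge \<Rightarrow> real) \<Rightarrow> 'v edge set" where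
  "supp E x = {e \<in> E. x e > 0}"

definition topset :: "'v edge set \<Rightarrow> 'v prefs \<Rightarrow> ('v edge \<Rightarrow> real) \<Rightarrow> 'v \<Rightarrow> 'v edge set" where
  "topset E R x v = {e \<in> inc (supp E x) v. \<forall>f \<in> inc (supp E x) v. R v (Some e) (Some f)}"

definition botset :: "'v edge set \<Rightarrow> 'v prefs \<Rightarrow> ('v edge \<Rightarrow> real) \<Rightarrow> 'v \<Rightarrow> 'v edge set" where
  "botset E R x v = {e \<in> inc (supp E x) v. \<forall>f \<in> inc (supp E x) v. R v (Some f) (Some e)}"

end

theory Submission
  imports Defs
begin

lemma rest_zero:
  fixes x :: "'a \<Rightarrow> real"
  assumes "finite S" "A \<subseteq> S" "B \<subseteq> S" "A \<inter> B = {}" "\<forall>f\<in>S. 0 \<le> x f"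
    "sum x S \<le> 1" "1 \<le> sum x A + sum x B"
  shows "sum x S = 1 \<and> (\<forall>f\<in>S. 0 < x f \<longrightarrow> f \<in> A \<union> B)"
proof -
  have fA: "finite A" "finite B" using assms finite_subset by auto
  have s1: "sum x S = sum x (A \<union> B) + sum x (S - (A \<union> B))"
    using sum.subset_diff[of "A \<union> B" S x] assms by auto
  have s2: "sum x (A \<union> B) = sum x A + sum x B" using sum.union_disjoint fA assms by blast
  have r0: "sum x (S - (A \<union> B)) \<ge> 0" using assms by (intro sum_nonneg) auto
  have eq: "sum x (S - (A \<union> B)) = 0" using s1 s2 r0 assms by linarith
  have "\<forall>f\<in>S - (A \<union> B). x f = 0"
    using sum_nonneg_eq_0_iff[of "S - (A \<union> B)" x] eq assms by auto
  then show ?thesis using s1 s2 eq assms by force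
qed

theorem lemma4p5:
  fixes V1 V2 :: "'v set" and E E1 E2 :: "'v set set" and R :: "'v prefs"
    and x :: "'v set \<Rightarrow> real" and v w :: 'v
  assumes G: "bipartite_graph V1 V2 E"
    and part: "E1 \<union> E2 = E" "E1 \<inter> E2 = {}"
    and pref: "valid_prefs (V1 \<union> V2) E R"
    and xS: "in_S (V1 \<union> V2) E E1 E2 R x"
    and vV: "v \<in> V1 \<union> V2"
    and suppv: "inc (supp E x) v \<noteq> {}"
    and eT: "{v, w} \<in> topset E R x v"
  shows "({v, w} \<in> E1 \<longrightarrow>
            xsum x (inc E w) = 1 \<and> botset E R x w = {{v, w}})
       \<and> ({v, w} \<in> E2 \<longrightarrow>
            xsum x (inc E w) = 1 \<and> {v, w} \<in> botset E R x w \<and>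
            xsum x (indiff E R v {v, w}) \<ge> xsum x (indiff E R w {v, w}))"
proof -
  define e where "e = {v, w}"
  have GG: "finite V1" "finite V2" "V1 \<inter> V2 = {}" "\<forall>e\<in>E. \<exists>a\<in>V1. \<exists>b\<in>V2. e = {a, b}"
    using G unfolding bipartite_graph_def by auto
  have "E \<subseteq> Pow (V1 \<union> V2)"
  proof
    fix f assume "f \<in> E"
    then obtain a b where "a \<in> V1" "b \<in> V2" "f = {a, b}" using GG(4) by blast
    then show "f \<in> Pow (V1 \<union> V2)" by auto
  qed
  hence finE: "finite E" using GG(1,2) finite_subset by blast
  have eE: "e \<in> E" and xe: "x e > 0" using eT unfolding e_def topset_def inc_def supp_def by auto
  have vw: "v \<noteq> w"
  proof
    assume "v = w"
    then obtain a b where "a \<in> V1" "b \<in> V2" "{v} = {a, b}" using GG(4) eE e_def by force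
    then have "a = v" "b = v" by (metis insertI1 insert_commute singletonD)+
    then show False using GG(3) \<open>a \<in> V1\<close> \<open>b \<in> V2\<close> by blast
  qed
  have wV: "w \<in> V1 \<union> V2" using GG(4) eE e_def by force
  have xS1: "\<forall>e\<in>E. 0 \<le> x e" and xS2: "\<forall>v\<in>V1 \<union> V2. xsum x (inc E v) \<le> 1"
    and xS3: "\<forall>e\<in>E1. x e + (\<Sum>v\<in>e. xsum x (better E R v e)) \<ge> 1"
    and xS4: "\<forall>e\<in>E2. \<forall>v\<in>e. xsum x (indiff E R v e) + (\<Sum>w\<in>e. xsum x (better E R w e)) \<ge> 1"
    using xS unfolding in_S_def by blast+
  have nonneg: "\<forall>f\<in>E. 0 \<le> x f" by (rule xS1)
  have finc: "\<And>u. finite (inc E u)" using finE unfolding inc_def by auto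
  have Sw: "xsum x (inc E w) \<le> 1" using xS2 wV by blast
  have prefw: "\<forall>a\<in>Some ` inc E w \<union> {None}. \<forall>b\<in>Some ` inc E w \<union> {None}. R w a b \<or> R w b a"
    using pref wV unfolding valid_prefs_def Let_def by blast
  have ew: "e \<in> inc E w" using eE e_def unfolding inc_def by auto
  have reflw: "R w (Some e) (Some e)" using prefw ew by blast
  have bv0: "xsum x (better E R v e) = 0"
    unfolding xsum_def
  proof (rule sum.neutral, rule ballI)
    fix f assume f: "f \<in> better E R v e"
    hence fE: "f \<in> inc E v" and sp: "spref R v f e" unfolding better_def by auto
    have "\<not> x f > 0"
    proof
      assume "x f > 0"
      hence "f \<in> inc (supp E x) v" using fE unfolding inc_def supp_def by auto
      hence "R v (Some e) (Some f)" using eT e_def unfolding topset_def by auto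
      thus False using sp unfolding spref_def by auto
    qed
    moreover have "x f \<ge> 0" using fE nonneg unfolding inc_def by auto
    ultimately show "x f = 0" by auto
  qed
  have sum2: "\<And>g :: 'v \<Rightarrow> real. (\<Sum>u\<in>e. g u) = g v + g w" using vw e_def by simp
  have Asub: "better E R w e \<subseteq> inc E w" unfolding better_def by auto
  have Bsub: "indiff E R w e \<subseteq> inc E w" unfolding indiff_def by auto
  have nonnegw: "\<forall>f\<in>inc E w. 0 \<le> x f" using nonneg unfolding inc_def by auto
  have suppw: "\<And>f. f \<in> inc (supp E x) w \<longleftrightarrow> f \<in> inc E w \<and> 0 < x f"
    unfolding inc_def supp_def by auto
  have E1case: "e \<in> E1 \<longrightarrow> xsum x (inc E w) = 1 \<and> botset E R x w = {e}"
  proof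
    assume "e \<in> E1"
    hence c: "x e + (\<Sum>u\<in>e. xsum x (better E R u e)) \<ge> 1" using xS3 by blast
    have dis: "better E R w e \<inter> {e} = {}" unfolding better_def spref_def by auto
    have "1 \<le> sum x (better E R w e) + sum x {e}" using c bv0 sum2 unfolding xsum_def by simp
    from rest_zero[OF finc Asub _ dis nonnegw Sw[unfolded xsum_def] this] ew
    have r: "sum x (inc E w) = 1" "\<forall>f\<in>inc E w. 0 < x f \<longrightarrow> f \<in> better E R w e \<union> {e}" by auto
    have "botset E R x w = {e}"
    proof
      show "botset E R x w \<subseteq> {e}"
      proof
        fix g assume g: "g \<in> botset E R x w"
        hence gs: "g \<in> inc E w" "0 < x g" and all: "\<forall>f \<in> inc (supp E x) w. R w (Some f) (Some g)"
          unfolding botset_def suppw by auto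
        have "R w (Some e) (Some g)" using all suppw ew xe by auto
        thus "g \<in> {e}" using r(2) gs unfolding better_def spref_def by auto
      qed
      show "{e} \<subseteq> botset E R x w"
        using r(2) ew xe reflw suppw unfolding botset_def better_def spref_def by auto
    qed
    thus "xsum x (inc E w) = 1 \<and> botset E R x w = {e}" using r unfolding xsum_def by auto
  qed
  have E2case: "e \<in> E2 \<longrightarrow> xsum x (inc E w) = 1 \<and> e \<in> botset E R x w \<and>
            xsum x (indiff E R v e) \<ge> xsum x (indiff E R w e)"
  proof
    assume "e \<in> E2"
    hence c: "\<forall>u\<in>e. xsum x (indiff E R u e) + (\<Sum>w\<in>e. xsum x (better E R w e)) \<ge> 1"
      using xS4 by blast
    have cv: "xsum x (indiff E R v e) + xsum x (better E R w e) \<ge> 1"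
      using c bv0 sum2 e_def by auto
    have cw: "xsum x (indiff E R w e) + xsum x (better E R w e) \<ge> 1"
      using c bv0 sum2 e_def by auto
    have dis: "better E R w e \<inter> indiff E R w e = {}" unfolding better_def indiff_def spref_def ipref_def by auto
    have "1 \<le> sum x (better E R w e) + sum x (indiff E R w e)" using cw unfolding xsum_def by simp
    from rest_zero[OF finc Asub Bsub dis nonnegw Sw[unfolded xsum_def] this]
    have r: "sum x (inc E w) = 1" "\<forall>f\<in>inc E w. 0 < x f \<longrightarrow> f \<in> better E R w e \<union> indiff E R w e" by auto
    have "e \<in> botset E R x w"
      using r(2) ew xe suppw unfolding botset_def better_def indiff_def spref_def ipref_def by auto
    moreover have "sum x (better E R w e) + sum x (indiff E R w e) \<le> sum x (inc E w)"
    proof -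
      have "sum x (better E R w e \<union> indiff E R w e) \<le> sum x (inc E w)"
        using Asub Bsub nonnegw finc by (intro sum_mono2) auto
      moreover have "sum x (better E R w e \<union> indiff E R w e) = sum x (better E R w e) + sum x (indiff E R w e)"
        using dis finite_subset[OF Asub finc] finite_subset[OF Bsub finc] by (intro sum.union_disjoint) auto
      ultimately show ?thesis by simp
    qed
    ultimately show "xsum x (inc E w) = 1 \<and> e \<in> botset E R x w \<and>
            xsum x (indiff E R v e) \<ge> xsum x (indiff E R w e)"
      using r cv unfolding xsum_def by auto
  qed
  show ?thesis using E1case E2case unfolding e_def by blast
qed

end
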